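(* Let $k\ge 2$ be a fixed integer. For $n\ge 1$, let $Y_n$ be the random variable counting the indices $i$ with $1\le i\le n-k+1$ such that $p_i<p_{i+1}<\cdots<p_{i+k-1}$, where $p=p_1\cdots p_n$ is a permutation chosen uniformly at random among all permutations of length $n$. Then there exists a constant $c>0$ (depending only on $k$) such that for all $n\ge k$, \[\operatorname{Var}(Y_n)\ge c\,n.\]
   Context: Each permutation of length $n$ is selected with probability $1/n!$. *)

theory Defs
  imports "HOL-Probability.Probability"
begin

text \<open>A permutation of length n is a bijection p of {1..n} (identity outside),
  i.e. p permutes {1..n}; p_i is p i.\<close>

definition perms :: "nat \<Rightarrow> (nat \<Rightarrow> nat) set" where
  "perms n = {p. p permutes {1..n}}"

definition unif_perm :: "nat \<Rightarrow> (nat \<Rightarrow> nat) pmf" where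
  "unif_perm n = pmf_of_set (perms n)"

definition Y :: "nat \<Rightarrow> nat \<Rightarrow> (nat \<Rightarrow> nat) \<Rightarrow> real" where
  "Y k n p = real (card {i. 1 \<le> i \<and> i + k - 1 \<le> n \<and>
                          (\<forall>j. i \<le> j \<and> j < i + k - 1 \<longrightarrow> p j < p (j + 1))})"

end

theory Submission
  imports Defs
begin

definition sw :: "nat \<Rightarrow> (nat \<Rightarrow> nat) \<Rightarrow> nat \<Rightarrow> nat" where
  "sw a p = (\<lambda>x. if x = a then p (Suc a) else if x = Suc a then p a else p x)"

definition incr :: "nat \<Rightarrow> nat \<Rightarrow> (nat \<Rightarrow> nat) \<Rightarrow> bool" where
  "incr l u p = (\<forall>j. l \<le> j \<longrightarrow> j < u \<longrightarrow> p j < p (Suc j))"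

definition GS :: "nat \<Rightarrow> nat \<Rightarrow> (nat \<Rightarrow> nat) \<Rightarrow> nat set" where
  "GS k n p = {i. 1 \<le> i \<and> i + k - 1 \<le> n \<and>
                          (\<forall>j. i \<le> j \<and> j < i + k - 1 \<longrightarrow> p j < p (j + 1))}"

lemma Y_GS: "Y k n p = real (card (GS k n p))"
  unfolding Y_def GS_def by simp

lemma finite_GS: "finite (GS k n p)"
  by (rule finite_subset[of _ "{1..n+1}"]) (auto simp: GS_def)

lemma sw_sw[simp]: "sw a (sw a p) = p"
  by (auto simp: sw_def fun_eq_iff)

lemma sw_perm:
  assumes "p \<in> perms n" "1 \<le> a" "Suc a \<le> n"
  shows "sw a p \<in> perms n"
proof -
  have "sw a p = p \<circ> Transposition.transpose a (Suc a)"
    by (auto simp: sw_def fun_eq_iff transpose_def)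
  moreover have "Transposition.transpose a (Suc a) permutes {1..n}"
    using assms by (intro permutes_swap_id) auto
  ultimately show ?thesis using assms(1) unfolding perms_def
    by (auto intro: permutes_compose)
qed

lemma GS_sw:
  assumes k: "k \<ge> 2" and a: "1 \<le> a" "a + k - 1 \<le> n" and D: "incr (a - 1) (a + k) p"
  shows "GS k n (sw a p) \<subseteq> GS k n p - {a}" "a \<in> GS k n p"
proof -
  have pa: "p a < p (Suc a)" using D k unfolding incr_def by auto
  show "a \<in> GS k n p" using D a unfolding GS_def incr_def by auto
  show "GS k n (sw a p) \<subseteq> GS k n p - {a}"
  proof
    fix i assume i: "i \<in> GS k n (sw a p)"
    have ia: "i \<noteq> a"
    proof
      assume "i = a"
      then have "sw a p a < sw a p (a + 1)" using i k unfolding GS_def by auto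
      then show False using pa by (simp add: sw_def)
    qed
    have "\<forall>j. i \<le> j \<and> j < i + k - 1 \<longrightarrow> p j < p (j + 1)"
    proof (intro allI impI)
      fix j assume j: "i \<le> j \<and> j < i + k - 1"
      have q: "sw a p j < sw a p (j + 1)" using i j unfolding GS_def by auto
      show "p j < p (j + 1)"
      proof -
        consider "j = a - 1" | "j = a" | "j = a + 1" | "j \<noteq> a - 1 \<and> j \<noteq> a \<and> j \<noteq> a + 1" by blast
        then show ?thesis
        proof cases
          case 1 then show ?thesis using D a k unfolding incr_def by (auto)
        next
          case 2 then show ?thesis using q pa by (simp add: sw_def)
        next
          case 3 then show ?thesis using D a k unfolding incr_def by auto
        next
          case 4 then have "sw a p j = p j" "sw a p (j+1) = p (j+1)" using a by (auto simp: sw_def)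
          then show ?thesis using q by simp
        qed
      qed
    qed
    then show "i \<in> GS k n p - {a}" using i ia unfolding GS_def by auto
  qed
qed

lemma Y_sw:
  assumes k: "k \<ge> 2" and a: "1 \<le> a" "a + k - 1 \<le> n" and D: "incr (a - 1) (a + k) p"
  shows "Y k n (sw a p) + 1 \<le> Y k n p"
proof -
  have "card (GS k n (sw a p)) \<le> card (GS k n p - {a})"
    using GS_sw(1)[OF assms] by (intro card_mono) (auto intro: finite_GS)
  also have "\<dots> = card (GS k n p) - 1" using GS_sw(2)[OF assms] finite_GS by simp
  moreover have "card (GS k n p) > 0"
    using GS_sw(2)[OF assms] finite_GS[of k n p] by (auto simp: card_gt_0_iff)
  ultimately have "card (GS k n (sw a p)) + 1 \<le> card (GS k n p)" by linarith
  then show ?thesis unfolding Y_GS by linarith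
qed

lemma incr_sw_not:
  assumes "k \<ge> 2" "incr (a - 1) (a + k) p"
  shows "\<not> incr (a - 1) (a + k) (sw a p)"
proof
  assume "incr (a - 1) (a + k) (sw a p)"
  then have "sw a p a < sw a p (Suc a)" using assms(1) unfolding incr_def by auto
  moreover have "p a < p (Suc a)" using assms unfolding incr_def by auto
  ultimately show False by (simp add: sw_def)
qed

lemma incr_cong:
  assumes "\<And>x. l \<le> x \<Longrightarrow> x \<le> u \<Longrightarrow> p x = q x"
  shows "incr l u p = incr l u q"
proof -
  have "p j < p (Suc j) \<longleftrightarrow> q j < q (Suc j)" if "l \<le> j" "j < u" for j
  proof -
    have "p j = q j" using assms that by simp
    moreover have "p (Suc j) = q (Suc j)" using assms that by simp
    ultimately show ?thesis by simp
  qed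
  then show ?thesis unfolding incr_def by blast
qed


lemma finite_perms: "finite (perms n)"
  unfolding perms_def by (rule finite_permutations) simp

lemma card_perms: "card (perms n) = fact n"
  unfolding perms_def by (rule card_permutations) auto

lemma perms_ne: "perms n \<noteq> {}"
  unfolding perms_def using permutes_id by blast

lemma sum_sw:
  assumes "1 \<le> a" "Suc a \<le> n"
  shows "(\<Sum>p\<in>perms n. f (sw a p)) = (\<Sum>p\<in>perms n. f p)"
  by (rule sum.reindex_bij_witness[of _ "sw a" "sw a"]) (use assms sw_perm in auto)

lemma sw_other: "x \<noteq> a \<Longrightarrow> x \<noteq> Suc a \<Longrightarrow> sw a p x = p x"
  by (simp add: sw_def)

lemma incr_sw_far:
  assumes "Suc b < l \<or> u < b"
  shows "incr l u (sw b q) = incr l u q"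
  by (rule incr_cong) (use assms in \<open>auto simp: sw_def\<close>)

lemma sw_comm:
  assumes "Suc a < b \<or> Suc b < a"
  shows "sw a (sw b p) = sw b (sw a p)"
  using assms by (auto simp: sw_def fun_eq_iff)

lemma sort_interval:
  fixes p :: "nat \<Rightarrow> nat"
  assumes inj: "inj_on p {l..u}"
  shows "\<exists>\<rho>. \<rho> permutes {l..u} \<and>
     (\<forall>j. l \<le> j \<longrightarrow> Suc j \<le> u \<longrightarrow> p (inv \<rho> j) < p (inv \<rho> (Suc j)))"
proof -
  define I where "I = {l..u}"
  define r where "r x = l + card {y\<in>I. p y < p x}" for x
  define \<rho> where "\<rho> x = (if x \<in> I then r x else x)" for x
  have fin: "finite I" by (simp add: I_def)
  have mono: "r x < r y" if "x \<in> I" "y \<in> I" "p x < p y" for x y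
  proof -
    have "{z\<in>I. p z < p x} \<subset> {z\<in>I. p z < p y}"
      using that by auto
    then have "card {z\<in>I. p z < p x} < card {z\<in>I. p z < p y}"
      by (intro psubset_card_mono) (use fin in auto)
    then show ?thesis by (simp add: r_def)
  qed
  have injr: "inj_on \<rho> I"
  proof (rule inj_onI)
    fix x y assume xy: "x \<in> I" "y \<in> I" "\<rho> x = \<rho> y"
    then have rxy: "r x = r y" by (simp add: \<rho>_def)
    show "x = y"
    proof (rule ccontr)
      assume "x \<noteq> y"
      then have "p x \<noteq> p y" using inj xy unfolding I_def inj_on_def by blast
      then have "p x < p y \<or> p y < p x" by auto
      then show False using mono xy rxy by fastforce
    qed
  qed
  have into: "\<rho> ` I \<subseteq> I"
  proof
    fix z assume "z \<in> \<rho> ` I"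
    then obtain x where x: "x \<in> I" "z = r x" by (auto simp: \<rho>_def)
    have "{y\<in>I. p y < p x} \<subseteq> I - {x}" by auto
    then have "card {y\<in>I. p y < p x} \<le> card (I - {x})"
      by (intro card_mono) (use fin in auto)
    also have "\<dots> = card I - 1" using x fin by simp
    also have "\<dots> = u - l" using x by (simp add: I_def)
    finally show "z \<in> I" using x by (auto simp: I_def r_def)
  qed
  have img: "\<rho> ` I = I" by (rule endo_inj_surj[OF fin into injr])
  have bij: "bij_betw \<rho> I I" using injr img by (simp add: bij_betw_def)
  have perm: "\<rho> permutes I"
    unfolding permutes_altdef using bij by (auto simp: \<rho>_def)
  have "\<forall>j. l \<le> j \<longrightarrow> Suc j \<le> u \<longrightarrow> p (inv \<rho> j) < p (inv \<rho> (Suc j))"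
  proof (intro allI impI)
    fix j assume j: "l \<le> j" "Suc j \<le> u"
    define x where "x = inv \<rho> j"
    define y where "y = inv \<rho> (Suc j)"
    have jI: "j \<in> I" "Suc j \<in> I" using j by (auto simp: I_def)
    have xI: "x \<in> I" "y \<in> I" unfolding x_def y_def
      using jI permutes_in_image[OF permutes_inv[OF perm]] by auto
    have rx: "\<rho> x = j" "\<rho> y = Suc j" unfolding x_def y_def
      using permutes_inverses(1)[OF perm] by auto
    have "x \<noteq> y" using rx by auto
    then have "p x \<noteq> p y" using inj xI unfolding I_def inj_on_def by blast
    moreover have "\<not> p y < p x"
    proof
      assume "p y < p x"
      then have "r y < r x" using mono xI by blast
      then show False using rx xI by (simp add: \<rho>_def)
    qed
    ultimately show "p (inv \<rho> j) < p (inv \<rho> (Suc j))" unfolding x_def y_def by auto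
  qed
  then show ?thesis using perm unfolding I_def by blast
qed

lemma count_D:
  assumes k: "k \<ge> 2" and a: "1 \<le> a" "a + k - 1 \<le> n"
  shows "fact n \<le> fact (k + 2) * card {p \<in> perms n. incr (a - 1) (a + k) p}"
proof -
  define I where "I = {max 1 (a - 1) .. min n (a + k)}"
  define DS where "DS = {p \<in> perms n. incr (a - 1) (a + k) p}"
  have IS: "I \<subseteq> {1..n}" by (auto simp: I_def)
  have cI: "card I \<le> k + 2" by (simp add: I_def)
  have key: "\<exists>\<rho>. \<rho> permutes I \<and> p \<circ> inv \<rho> \<in> DS" if p: "p \<in> perms n" for p
  proof -
    have pp: "p permutes {1..n}" using p by (simp add: perms_def)
    have "inj_on p I" using permutes_inj[OF pp] by (auto intro: inj_on_subset)
    then obtain \<rho> where rho: "\<rho> permutes I"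
      and srt: "\<forall>j. max 1 (a - 1) \<le> j \<longrightarrow> Suc j \<le> min n (a + k) \<longrightarrow> p (inv \<rho> j) < p (inv \<rho> (Suc j))"
      using sort_interval[of p "max 1 (a - 1)" "min n (a + k)"] unfolding I_def by blast
    define q where "q = p \<circ> inv \<rho>"
    have ir: "inv \<rho> permutes {1..n}"
      using permutes_subset[OF permutes_inv[OF rho] IS] .
    have qp: "q permutes {1..n}" unfolding q_def by (rule permutes_compose[OF ir pp])
    have "incr (a - 1) (a + k) q" unfolding incr_def
    proof (intro allI impI)
      fix j assume j: "a - 1 \<le> j" "j < a + k"
      consider "j = 0" | "j = n" | "1 \<le> j" "Suc j \<le> n" using j a k by linarith
      then show "q j < q (Suc j)"
      proof cases
        case 1
        have "q 0 = 0" using permutes_not_in[OF qp] by simp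
        moreover have "q 1 \<in> {1..n}" using permutes_in_image[OF qp] a k by simp
        ultimately show ?thesis using 1 by simp
      next
        case 2
        have "q (Suc n) = Suc n" using permutes_not_in[OF qp] by simp
        moreover have "q n \<in> {1..n}" using permutes_in_image[OF qp] a k by simp
        ultimately show ?thesis using 2 by simp
      next
        case 3
        then show ?thesis using srt j unfolding q_def by simp
      qed
    qed
    then have "q \<in> DS" using qp by (simp add: DS_def perms_def)
    then show ?thesis using rho unfolding q_def by blast
  qed
  have sub: "perms n \<subseteq> (\<lambda>(q, \<rho>). q \<circ> \<rho>) ` (DS \<times> {\<rho>. \<rho> permutes I})"
  proof
    fix p assume p: "p \<in> perms n"
    obtain \<rho> where rho: "\<rho> permutes I" "p \<circ> inv \<rho> \<in> DS" using key[OF p] by blast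
    have "p = (p \<circ> inv \<rho>) \<circ> \<rho>"
      using permutes_inv_o(2)[OF rho(1)] by (metis comp_assoc comp_id)
    moreover have "(p \<circ> inv \<rho>, \<rho>) \<in> DS \<times> {\<rho>. \<rho> permutes I}" using rho by simp
    ultimately show "p \<in> (\<lambda>(q, \<rho>). q \<circ> \<rho>) ` (DS \<times> {\<rho>. \<rho> permutes I})"
      by (metis (no_types, lifting) case_prod_conv image_eqI)
  qed
  have finDS: "finite DS" using finite_perms by (simp add: DS_def)
  have finI: "finite I" by (simp add: I_def)
  have "fact n = card (perms n)" by (simp add: card_perms)
  also have "\<dots> \<le> card ((\<lambda>(q, \<rho>). q \<circ> \<rho>) ` (DS \<times> {\<rho>. \<rho> permutes I}))"
    by (rule card_mono[OF _ sub]) (use finDS finite_permutations[OF finI] in auto)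
  also have "\<dots> \<le> card (DS \<times> {\<rho>. \<rho> permutes I})" by (rule card_image_le) (use finDS finite_permutations[OF finI] in auto)
  also have "\<dots> = card DS * fact (card I)" by (simp add: card_cartesian_product card_permutations[OF refl finI])
  also have "\<dots> \<le> card DS * fact (k + 2)" by (intro mult_le_mono2 fact_mono cI)
  finally show ?thesis by (simp add: DS_def mult.commute)
qed

lemma main_n:
  fixes k n :: nat
  assumes k: "k \<ge> 2" and n: "n \<ge> k"
  shows "real n / (24 * real k * fact (k + 2)) \<le> measure_pmf.variance (unif_perm n) (Y k n)"
proof -
  define P where "P = perms n"
  define N where "N = real (card P)"
  define R where "R = (n + k) div (2 * k)"
  define a where "a t = 2 * t * k + 1" for t
  define D where "D t p = incr (a t - 1) (a t + k) p" for t p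
  define h where "h t p = (if D t p then 1 else 0) - (if D t (sw (a t) p) then 1 else 0 :: real)" for t p
  define Z where "Z p = (\<Sum>t<R. h t p)" for p
  define A where "A t = real (card {p \<in> P. D t p})" for t
  define S where "S = (\<Sum>t<R. A t)"
  define M where "M = real (fact (k + 2) :: nat)"
  have finP: "finite P" by (simp add: P_def finite_perms)
  have Npos: "N > 0" unfolding N_def P_def using finite_perms perms_ne by (simp add: card_gt_0_iff)
  have aR: "1 \<le> a t" "a t + k - 1 \<le> n" "Suc (a t) \<le> n" if "t < R" for t
  proof -
    have "R * (2 * k) \<le> n + k" unfolding R_def by (rule div_times_less_eq_dividend)
    then have "2 * k * R \<le> n + k" by (simp add: mult.commute)
    moreover have "Suc t \<le> R" using that by simp
    then have "2 * k * Suc t \<le> 2 * k * R" by (rule mult_le_mono2)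
    ultimately have "2 * k * t + 2 * k \<le> n + k" by simp
    then show "1 \<le> a t" "a t + k - 1 \<le> n" "Suc (a t) \<le> n" using k unfolding a_def
      by (auto simp: algebra_simps)
  qed
  have sumA: "(\<Sum>p\<in>P. if D t p then 1 else 0 :: real) = A t" for t
    unfolding A_def by (simp add: sum.If_cases finP Int_def)
  have sumsw: "(\<Sum>p\<in>P. f (sw (a t) p)) = (\<Sum>p\<in>P. f p)" if "t < R" for t and f :: "_ \<Rightarrow> real"
    unfolding P_def using sum_sw aR[OF that] by blast
  have hsw: "h t (sw (a t) p) = - h t p" for t p by (simp add: h_def)
  have F1: "(\<Sum>p\<in>P. h t p) = 0" if "t < R" for t
  proof -
    have "(\<Sum>p\<in>P. h t p) = (\<Sum>p\<in>P. if D t p then 1 else 0) - (\<Sum>p\<in>P. if D t (sw (a t) p) then 1 else 0)"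
      unfolding h_def by (simp add: sum_subtractf)
    also have "(\<Sum>p\<in>P. if D t (sw (a t) p) then 1 else 0) = (\<Sum>p\<in>P. if D t p then 1 else (0::real))"
      using sumsw[OF that, of "\<lambda>p. if D t p then 1 else 0"] by simp
    finally show ?thesis by simp
  qed
  have F2: "(\<Sum>p\<in>P. Y k n p * h t p) \<ge> A t / 2" if t: "t < R" for t
  proof -
    have pw: "(Y k n p - Y k n (sw (a t) p)) * h t p \<ge> (if D t p then 1 else 0)" if "p \<in> P" for p
    proof (cases "D t p")
      case True
      then have "\<not> D t (sw (a t) p)" using incr_sw_not[OF k] by (simp add: D_def)
      moreover have "Y k n (sw (a t) p) + 1 \<le> Y k n p" using Y_sw[OF k aR(1,2)[OF t]] True by (simp add: D_def)
      ultimately show ?thesis using True by (simp add: h_def)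
    next
      case False
      show ?thesis
      proof (cases "D t (sw (a t) p)")
        case True
        have "Y k n (sw (a t) (sw (a t) p)) + 1 \<le> Y k n (sw (a t) p)"
          using Y_sw[OF k aR(1,2)[OF t], of "sw (a t) p"] True by (simp only: D_def)
        then have "Y k n p + 1 \<le> Y k n (sw (a t) p)" by simp
        then show ?thesis using True False by (simp add: h_def)
      qed (simp add: h_def False)
    qed
    have "(\<Sum>p\<in>P. Y k n p * h t p) = (\<Sum>p\<in>P. Y k n (sw (a t) p) * h t (sw (a t) p))"
      using sumsw[OF t, of "\<lambda>p. Y k n p * h t p"] by simp
    also have "\<dots> = - (\<Sum>p\<in>P. Y k n (sw (a t) p) * h t p)" by (simp add: hsw sum_negf)
    finally have "2 * (\<Sum>p\<in>P. Y k n p * h t p) = (\<Sum>p\<in>P. (Y k n p - Y k n (sw (a t) p)) * h t p)"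
      by (simp add: algebra_simps sum_subtractf)
    also have "\<dots> \<ge> (\<Sum>p\<in>P. if D t p then 1 else 0)" by (rule sum_mono) (rule pw)
    finally show ?thesis using sumA[of t] by simp
  qed
  have F3: "(\<Sum>p\<in>P. h t p * h t p) = 2 * A t" if t: "t < R" for t
  proof -
    have pw: "h t p * h t p = (if D t p then 1 else 0) + (if D t (sw (a t) p) then 1 else 0)" for p
    proof (cases "D t p")
      case True
      then have "\<not> D t (sw (a t) p)" using incr_sw_not[OF k] by (simp add: D_def)
      then show ?thesis using True by (simp add: h_def)
    qed (simp add: h_def)
    have "(\<Sum>p\<in>P. h t p * h t p) = (\<Sum>p\<in>P. if D t p then 1 else 0) + (\<Sum>p\<in>P. if D t (sw (a t) p) then 1 else 0)"
      by (simp add: pw sum.distrib)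
    also have "(\<Sum>p\<in>P. if D t (sw (a t) p) then 1 else 0) = (\<Sum>p\<in>P. if D t p then 1 else (0::real))"
      using sumsw[OF t, of "\<lambda>p. if D t p then 1 else 0"] by simp
    finally show ?thesis using sumA[of t] by simp
  qed
  have F4: "(\<Sum>p\<in>P. h s p * h t p) = 0" if st: "s < R" "t < R" "s \<noteq> t" for s t
  proof -
    have far: "Suc (a s) < a t - 1 \<or> a t + k < a s"
    proof (cases "s < t")
      case True
      then have "Suc s * k \<le> t * k" by (intro mult_le_mono1) simp
      then show ?thesis using k unfolding a_def by (simp add: algebra_simps)
    next
      case False
      then have "Suc t * k \<le> s * k" using st by (intro mult_le_mono1) simp
      then show ?thesis using k unfolding a_def by (simp add: algebra_simps)
    qed
    have far2: "Suc (a s) < a t \<or> Suc (a t) < a s" using far k by auto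
    have loc: "h t (sw (a s) p) = h t p" for p
    proof -
      have "D t (sw (a s) p) = D t p" unfolding D_def by (rule incr_sw_far) (use far in auto)
      moreover have "D t (sw (a t) (sw (a s) p)) = D t (sw (a t) p)"
        unfolding sw_comm[OF far2, symmetric] D_def by (rule incr_sw_far) (use far in auto)
      ultimately show ?thesis by (simp add: h_def)
    qed
    have "(\<Sum>p\<in>P. h s p * h t p) = (\<Sum>p\<in>P. h s (sw (a s) p) * h t (sw (a s) p))"
      using sumsw[OF st(1), of "\<lambda>p. h s p * h t p"] by simp
    also have "\<dots> = - (\<Sum>p\<in>P. h s p * h t p)" by (simp add: hsw loc sum_negf)
    finally show ?thesis by simp
  qed
  have SZ: "(\<Sum>p\<in>P. Z p) = 0"
    unfolding Z_def by (subst sum.swap) (simp add: F1)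
  have SYZ: "(\<Sum>p\<in>P. Y k n p * Z p) \<ge> S / 2"
  proof -
    have "(\<Sum>p\<in>P. Y k n p * Z p) = (\<Sum>t<R. \<Sum>p\<in>P. Y k n p * h t p)"
      unfolding Z_def sum_distrib_left by (rule sum.swap)
    also have "\<dots> \<ge> (\<Sum>t<R. A t / 2)" by (rule sum_mono) (rule F2, simp)
    finally show ?thesis by (simp add: S_def sum_divide_distrib)
  qed
  have SZZ: "(\<Sum>p\<in>P. Z p * Z p) = 2 * S"
  proof -
    have "(\<Sum>p\<in>P. Z p * Z p) = (\<Sum>s<R. \<Sum>t<R. \<Sum>p\<in>P. h s p * h t p)"
    proof -
      have "(\<Sum>p\<in>P. Z p * Z p) = (\<Sum>p\<in>P. \<Sum>s<R. \<Sum>t<R. h s p * h t p)"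
        unfolding Z_def by (simp only: sum_product)
      also have "\<dots> = (\<Sum>s<R. \<Sum>p\<in>P. \<Sum>t<R. h s p * h t p)" by (rule sum.swap)
      also have "\<dots> = (\<Sum>s<R. \<Sum>t<R. \<Sum>p\<in>P. h s p * h t p)"
        by (rule sum.cong[OF refl]) (rule sum.swap)
      finally show ?thesis .
    qed
    also have "\<dots> = (\<Sum>s<R. \<Sum>t<R. if t = s then 2 * A s else 0)"
      by (rule sum.cong[OF refl], rule sum.cong[OF refl]) (auto simp: F3 F4)
    also have "\<dots> = 2 * S" by (simp add: S_def sum_distrib_left)
    finally show ?thesis .
  qed
  define \<mu> where "\<mu> = (\<Sum>p\<in>P. Y k n p) / N"
  define V where "V = (\<Sum>p\<in>P. (Y k n p - \<mu>)^2)"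
  have "0 \<le> (\<Sum>p\<in>P. (Y k n p - \<mu> - Z p / 4)^2)" by (rule sum_nonneg) simp
  also have "\<dots> = V - (1/2) * (\<Sum>p\<in>P. Y k n p * Z p) + (1/2) * \<mu> * (\<Sum>p\<in>P. Z p) + (1/16) * (\<Sum>p\<in>P. Z p * Z p)"
  proof -
    have pw: "(Y k n p - \<mu> - Z p / 4)^2 = (Y k n p - \<mu>)^2 - (1/2) * (Y k n p * Z p) + ((1/2) * \<mu>) * Z p + (1/16) * (Z p * Z p)" for p
      unfolding power2_eq_square by (simp add: field_simps)
    show ?thesis unfolding V_def pw
      by (simp only: sum.distrib sum_subtractf sum_distrib_left[symmetric])
  qed
  finally have VS: "V \<ge> S / 8" using SZ SYZ SZZ by simp
  have var: "measure_pmf.variance (unif_perm n) (Y k n) = V / N"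
    unfolding unif_perm_def V_def \<mu>_def N_def
    using integral_pmf_of_set[OF perms_ne finite_perms] by (simp add: P_def)
  have AN: "A t \<ge> N / M" if "t < R" for t
  proof -
    have "fact n \<le> fact (k + 2) * card {p \<in> perms n. D t p}"
      using count_D[OF k aR(1,2)[OF that]] by (simp add: D_def)
    then have "real (fact n) \<le> real (fact (k + 2) * card {p \<in> perms n. D t p})" by (simp only: of_nat_le_iff)
    then have "N \<le> M * A t" by (simp add: N_def M_def A_def P_def card_perms)
    moreover have "M > 0" unfolding M_def by (simp only: of_nat_0_less_iff fact_gt_zero)
    ultimately show ?thesis by (simp add: field_simps)
  qed
  have "S \<ge> real R * (N / M)"
  proof -
    have "(\<Sum>t<R. N / M) \<le> S" unfolding S_def by (rule sum_mono) (simp add: AN)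
    then show ?thesis by simp
  qed
  have Mpos: "M > 0" unfolding M_def by (simp only: of_nat_0_less_iff fact_gt_zero)
  have "V / N \<ge> real R / (8 * M)"
  proof -
    have "real R * (N / M) / 8 \<le> S / 8" using \<open>S \<ge> real R * (N / M)\<close> by (simp add: divide_right_mono)
    then have "V \<ge> real R * (N / M) / 8" using VS by linarith
    then show ?thesis using Npos Mpos by (simp add: field_simps)
  qed
  moreover have "real n \<le> 3 * real k * real R"
  proof -
    have "(2 * k) div (2 * k) \<le> (n + k) div (2 * k)" by (rule div_le_mono) (use n in simp)
    then have R1: "R \<ge> 1" using k by (simp add: R_def)
    have e: "R * (2 * k) + (n + k) mod (2 * k) = n + k" unfolding R_def by (rule div_mult_mod_eq)
    have "(n + k) mod (2 * k) < 2 * k" using k by (intro mod_less_divisor) simp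
    then have "n + k < 2 * k * R + 2 * k" using e by (simp add: mult.commute)
    then have "n < 2 * k * R + k" by simp
    also have "\<dots> \<le> 3 * k * R" using R1 by simp
    finally have "n \<le> 3 * k * R" by simp
    then have "real n \<le> real (3 * k * R)" by (simp only: of_nat_le_iff)
    then show ?thesis by simp
  qed
  moreover have kpos: "real k > 0" using k by simp
  ultimately have n1: "real n / (24 * real k * M) \<le> 3 * real k * real R / (24 * real k * M)"
    using Mpos by (intro divide_right_mono) auto
  have n2: "3 * real k * real R / (24 * real k * M) = real R / (8 * M)"
    using kpos Mpos by (simp add: field_simps)
  have "real n / (24 * real k * M) \<le> V / N" using n1 n2 \<open>V / N \<ge> real R / (8 * M)\<close> by linarith
  then have fin: "real n / (24 * real k * M) \<le> V / N" .
  have Meq: "fact (k + 2) = M" unfolding M_def by (simp only: of_nat_fact)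
  show ?thesis unfolding var Meq by (rule fin)
qed

theorem proposition3p4:
  fixes k :: nat
  assumes "k \<ge> 2"
  shows "\<exists>c::real. c > 0 \<and>
           (\<forall>n. n \<ge> k \<longrightarrow>
              measure_pmf.variance (unif_perm n) (Y k n) \<ge> c * real n)"
proof (intro exI conjI allI impI)
  show "1 / (24 * real k * fact (k + 2)) > (0::real)" using assms by simp
  fix n assume "n \<ge> k"
  from main_n[OF assms this] show "1 / (24 * real k * fact (k + 2)) * real n \<le> measure_pmf.variance (unif_perm n) (Y k n)"
    by simp
qed

end
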